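(* Let $\Gamma=(V,E)$ be a graph of order $n$, minimum degree $\delta$ and maximum degree $\Delta$, and let $\bar{\Gamma}=(V,\bar E)$ be its complement. Let $k$ be an integer. (a) Every dominating set $S\subseteq V$ in $\bar{\Gamma}$ with $|S|\ge\left\lceil\frac{n+k+\Delta-1}{2}\right\rceil$ is a global offensive $k$-alliance in $\bar{\Gamma}$. (b) Every dominating set $S\subseteq V$ in $\Gamma$ with $|S|\ge\left\lceil\frac{2n+k-\delta-2}{2}\right\rceil$ is a global offensive $k$-alliance in $\Gamma$.
   Context: Graphs are finite and simple. In a graph $G$, for $S\subseteq V$ and $v\in V$, $\delta_S(v)$ is the number of neighbours of $v$ in $S$, $\overline{S}=V\setminus S$, and $\partial(S)$ the set of vertices of $\overline{S}$ with a neighbour in $S$. A nonempty $S$ is an offensive $k$-alliance in $G$ if $\delta_S(v)\ge\delta_{\overline{S}}(v)+k$ for all $v\in\partial(S)$, and a global offensive $k$-alliance if moreover it is dominating in $G$. *)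

theory Defs
  imports Complex_Main
begin

definition graph :: "'a set \<Rightarrow> ('a \<Rightarrow> 'a \<Rightarrow> bool) \<Rightarrow> bool" where
  "graph V E \<longleftrightarrow> finite V \<and> (\<forall>u v. E u v \<longrightarrow> u \<in> V \<and> v \<in> V)
      \<and> (\<forall>u v. E u v \<longrightarrow> E v u) \<and> (\<forall>v. \<not> E v v)"

definition compl_graph :: "'a set \<Rightarrow> ('a \<Rightarrow> 'a \<Rightarrow> bool) \<Rightarrow> 'a \<Rightarrow> 'a \<Rightarrow> bool" where
  "compl_graph V E = (\<lambda>u v. u \<in> V \<and> v \<in> V \<and> u \<noteq> v \<and> \<not> E u v)"

definition degree :: "'a set \<Rightarrow> ('a \<Rightarrow> 'a \<Rightarrow> bool) \<Rightarrow> 'a \<Rightarrow> nat" where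
  "degree V E v = card {u \<in> V. E v u}"

definition min_degree :: "'a set \<Rightarrow> ('a \<Rightarrow> 'a \<Rightarrow> bool) \<Rightarrow> nat" where
  "min_degree V E = Min (degree V E ` V)"

definition max_degree :: "'a set \<Rightarrow> ('a \<Rightarrow> 'a \<Rightarrow> bool) \<Rightarrow> nat" where
  "max_degree V E = Max (degree V E ` V)"

definition nbrs_in :: "('a \<Rightarrow> 'a \<Rightarrow> bool) \<Rightarrow> 'a set \<Rightarrow> 'a \<Rightarrow> nat" where
  "nbrs_in E S v = card {u \<in> S. E v u}"

definition boundary :: "'a set \<Rightarrow> ('a \<Rightarrow> 'a \<Rightarrow> bool) \<Rightarrow> 'a set \<Rightarrow> 'a set" where
  "boundary V E S = {v \<in> V - S. \<exists>u \<in> S. E v u}"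

definition dominating :: "'a set \<Rightarrow> ('a \<Rightarrow> 'a \<Rightarrow> bool) \<Rightarrow> 'a set \<Rightarrow> bool" where
  "dominating V E S \<longleftrightarrow> S \<subseteq> V \<and> (\<forall>v \<in> V - S. \<exists>u \<in> S. E v u)"

definition offensive_alliance :: "'a set \<Rightarrow> ('a \<Rightarrow> 'a \<Rightarrow> bool) \<Rightarrow> int \<Rightarrow> 'a set \<Rightarrow> bool" where
  "offensive_alliance V E k S \<longleftrightarrow> S \<noteq> {} \<and> S \<subseteq> V \<and>
     (\<forall>v \<in> boundary V E S. int (nbrs_in E S v) \<ge> int (nbrs_in E (V - S) v) + k)"

definition global_offensive_alliance :: "'a set \<Rightarrow> ('a \<Rightarrow> 'a \<Rightarrow> bool) \<Rightarrow> int \<Rightarrow> 'a set \<Rightarrow> bool" where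
  "global_offensive_alliance V E k S \<longleftrightarrow> offensive_alliance V E k S \<and> dominating V E S"

end

theory Submission
  imports Defs
begin

lemma out_bound:
  assumes "finite V" "S \<subseteq> V" "v \<in> V - S" "\<not> F v v"
  shows "card {u \<in> V - S. F v u} + card S + 1 \<le> card V"
proof -
  have "{u \<in> V - S. F v u} \<subseteq> V - S - {v}" using assms by auto
  hence "card {u \<in> V - S. F v u} \<le> card (V - S - {v})"
    using assms by (intro card_mono) auto
  moreover have "card (V - S - {v}) = card V - card S - 1"
    using assms by (simp add: card_Diff_subset finite_subset)
  moreover have "card S < card V" using assms
    by (metis DiffD1 DiffD2 psubsetI psubset_card_mono)
  ultimately show ?thesis by linarith
qed

lemma split_deg:
  assumes "finite V" "S \<subseteq> V" "graph V E"
  shows "nbrs_in E S v + nbrs_in E (V - S) v = degree V E v"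
proof -
  have "{u \<in> V. E v u} = {u \<in> S. E v u} \<union> {u \<in> V - S. E v u}" using assms by auto
  moreover have "card ({u \<in> S. E v u} \<union> {u \<in> V - S. E v u}) = card {u \<in> S. E v u} + card {u \<in> V - S. E v u}"
    using assms by (intro card_Un_disjoint) (auto intro: finite_subset)
  ultimately show ?thesis unfolding nbrs_in_def degree_def by simp
qed

lemma half_le: "(x::real)/2 \<le> y \<Longrightarrow> x \<le> 2*y" by linarith

theorem mainTheorem10:
  fixes V :: "'a set" and E :: "'a \<Rightarrow> 'a \<Rightarrow> bool" and k :: int
  assumes "graph V E" and "V \<noteq> {}"
  shows "(\<forall>S. dominating V (compl_graph V E) S \<and>
            int (card S) \<ge> \<lceil>(real (card V) + real_of_int k + real (max_degree V E) - 1) / 2\<rceil>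
            \<longrightarrow> global_offensive_alliance V (compl_graph V E) k S)
       \<and> (\<forall>S. dominating V E S \<and>
            int (card S) \<ge> \<lceil>(2 * real (card V) + real_of_int k - real (min_degree V E) - 2) / 2\<rceil>
            \<longrightarrow> global_offensive_alliance V E k S)"
proof (intro conjI allI impI)
  have fin: "finite V" using assms(1) unfolding graph_def by auto
  fix S
  assume h: "dominating V (compl_graph V E) S \<and>
            int (card S) \<ge> \<lceil>(real (card V) + real_of_int k + real (max_degree V E) - 1) / 2\<rceil>"
  hence sub: "S \<subseteq> V" and dom: "dominating V (compl_graph V E) S" unfolding dominating_def by auto
  from h have "(real (card V) + real_of_int k + real (max_degree V E) - 1) / 2 \<le> real_of_int (int (card S))"
    using ceiling_le_iff by blast
  hence "real (card V) + real_of_int k + real (max_degree V E) - 1 \<le> 2 * real (card S)" by (simp only: of_int_of_nat_eq) (rule half_le)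
  hence "real_of_int (int (card V) + k + int (max_degree V E) - 1) \<le> real_of_int (2 * int (card S))"
    by (simp only: of_int_add of_int_diff of_int_mult of_int_of_nat_eq of_int_1 of_int_numeral)
  hence c: "int (card V) + k + int (max_degree V E) - 1 \<le> 2 * int (card S)" by (simp only: of_int_le_iff)
  have ne: "S \<noteq> {}" using dom assms(2) unfolding dominating_def by auto
  have "\<forall>v \<in> boundary V (compl_graph V E) S. int (nbrs_in (compl_graph V E) S v)
          \<ge> int (nbrs_in (compl_graph V E) (V - S) v) + k"
  proof
    fix v assume "v \<in> boundary V (compl_graph V E) S"
    hence v: "v \<in> V - S" unfolding boundary_def by auto
    have o: "nbrs_in (compl_graph V E) (V - S) v + card S + 1 \<le> card V"
      unfolding nbrs_in_def using out_bound[OF fin sub v, of "compl_graph V E"]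
      by (simp add: compl_graph_def)
    have "{u \<in> S. compl_graph V E v u} = S - {u \<in> S. E v u}"
      using sub v by (auto simp: compl_graph_def)
    hence "nbrs_in (compl_graph V E) S v = card S - card {u \<in> S. E v u}"
      unfolding nbrs_in_def using fin sub
      by (simp add: card_Diff_subset finite_subset)
    moreover have "card {u \<in> S. E v u} \<le> card S" using fin sub
      by (intro card_mono) (auto intro: finite_subset)
    moreover have "card {u \<in> S. E v u} \<le> degree V E v"
      unfolding degree_def using fin sub by (intro card_mono) auto
    moreover have "degree V E v \<le> max_degree V E"
      unfolding max_degree_def using fin v by (intro Max_ge) auto
    ultimately show "int (nbrs_in (compl_graph V E) S v)
          \<ge> int (nbrs_in (compl_graph V E) (V - S) v) + k" using o c by linarith
  qed
  thus "global_offensive_alliance V (compl_graph V E) k S"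
    unfolding global_offensive_alliance_def offensive_alliance_def using ne sub dom by auto
next
  have fin: "finite V" using assms(1) unfolding graph_def by auto
  fix S
  assume h: "dominating V E S \<and>
            int (card S) \<ge> \<lceil>(2 * real (card V) + real_of_int k - real (min_degree V E) - 2) / 2\<rceil>"
  hence sub: "S \<subseteq> V" and dom: "dominating V E S" unfolding dominating_def by auto
  from h have "(2 * real (card V) + real_of_int k - real (min_degree V E) - 2) / 2 \<le> real_of_int (int (card S))"
    using ceiling_le_iff by blast
  hence "2 * real (card V) + real_of_int k - real (min_degree V E) - 2 \<le> 2 * real (card S)" by (simp only: of_int_of_nat_eq) (rule half_le)
  hence "real_of_int (2 * int (card V) + k - int (min_degree V E) - 2) \<le> real_of_int (2 * int (card S))"
    by (simp only: of_int_add of_int_diff of_int_mult of_int_of_nat_eq of_int_1 of_int_numeral)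
  hence c: "2 * int (card V) + k - int (min_degree V E) - 2 \<le> 2 * int (card S)" by (simp only: of_int_le_iff)
  have ne: "S \<noteq> {}" using dom assms(2) unfolding dominating_def by auto
  have "\<forall>v \<in> boundary V E S. int (nbrs_in E S v) \<ge> int (nbrs_in E (V - S) v) + k"
  proof
    fix v assume "v \<in> boundary V E S"
    hence v: "v \<in> V - S" unfolding boundary_def by auto
    have o: "nbrs_in E (V - S) v + card S + 1 \<le> card V"
      unfolding nbrs_in_def using out_bound[OF fin sub v, of E] assms(1)
      by (simp add: graph_def)
    have s: "nbrs_in E S v + nbrs_in E (V - S) v = degree V E v"
      using split_deg[OF fin sub assms(1)] .
    have "min_degree V E \<le> degree V E v"
      unfolding min_degree_def using fin v by (intro Min_le) auto
    thus "int (nbrs_in E S v) \<ge> int (nbrs_in E (V - S) v) + k" using o c s by linarith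
  qed
  thus "global_offensive_alliance V E k S"
    unfolding global_offensive_alliance_def offensive_alliance_def using ne sub dom by auto
qed

end
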